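(* In the setting of the data-aided combiner (with $\mathbf M=\mathbf H(\hat{\mathbf W}\circ\mathbf E)+\mathbf Z$, $\hat{\mathbf h}_k=\mathbf M\mathbf C_k$ and $\mathbf C_k=(\mathbf P+N_0\mathbf I)^{-1}\beta_k(\hat{\mathbf w}_k\circ\mathbb{E}[\mathbf e_k])^{\rm H}$ the optimal combiner), assume additionally that $\mathbf S\mathbf S^{\rm H}=\tau_{\rm T}P_{\rm T}\mathbf I_K$ and $\hat{\mathbf X}\hat{\mathbf X}^{\rm H}=\tau_{\rm D}P_{\rm D}\mathbf I_K$ for some $P_{\rm T}>0$. Then $$\mathbb{E}\|\hat{\mathbf h}_k-\mathbf h_k\|^2=\frac{M\beta_k}{1+\rho_k^{\rm DA}\beta_k},\qquad\text{hence}\qquad 10\log_{10}\frac{\mathbb{E}\|\hat{\mathbf h}_k-\mathbf h_k\|^2}{\mathbb{E}\|\mathbf h_k\|^2}=10\log_{10}\Big(\frac{1}{1+\rho_k^{\rm DA}\beta_k}\Big),$$ where $$\rho_k^{\rm DA}=\frac{\tau_{\rm T}P_{\rm T}}{N_0}+\frac{\tau_{\rm D}P_{\rm D}(1-2\mathrm{BER}_k)^2}{\Delta S_{\mathbf X}+N_0},\qquad \Delta S_{\mathbf X}=P_{\rm D}\sum_{i=1}^K\beta_i\{1-(1-2\mathrm{BER}_i)^2\}.$$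
   Context: Setting: integers $M,K,\tau_{\rm T},\tau_{\rm D}\ge1$; $N_0,P_{\rm D}>0$; $\beta_i>0$; $\mathrm{BER}_i\in[0,1]$. $\hat{\mathbf W}=[\mathbf S,\hat{\mathbf X}]$ with $\mathbf S\in\mathbb{C}^{K\times\tau_{\rm T}}$, $\hat{\mathbf X}\in\mathbb{C}^{K\times\tau_{\rm D}}$ deterministic, $|\hat x_{kj}|^2=P_{\rm D}$. $\mathbf E=[\mathbf E_1,\mathbf E_2]$, $\mathbf E_1$ all ones, $\mathbf E_2\in\{\pm1\}^{K\times\tau_{\rm D}}$ independent entries with $\Pr([\mathbf E_2]_{kj}=-1)=\mathrm{BER}_k$. $\mathbf H\in\mathbb{C}^{M\times K}$ independent columns $\mathbf h_k\sim\mathcal{CN}(\mathbf 0,\beta_k\mathbf I_M)$; $\mathbf Z$ i.i.d. $\mathcal{CN}(0,N_0)$ entries; $\mathbf H,\mathbf E,\mathbf Z$ independent. $\hat{\mathbf w}_k,\mathbf e_k$ are the $k$-th rows of $\hat{\mathbf W},\mathbf E$; $\mathbf P=\mathbb{E}[(\hat{\mathbf W}\circ\mathbf E)^{\rm H}\mathrm{diag}(\beta_1,\dots,\beta_K)(\hat{\mathbf W}\circ\mathbf E)]$; $\circ$ is the Hadamard product. (In the paper the assumption $\hat{\mathbf X}\hat{\mathbf X}^{\rm H}=\tau_{\rm D}P_{\rm D}\mathbf I_K$ is justified as an approximation for long data length $\tau_{\rm D}$.) *)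

theory Defs
  imports "HOL-Probability.Probability"
begin

text \<open>Matrices are rendered as \<open>complex ^ 'cols ^ 'rows\<close>, entry \<open>A $ row $ col\<close>.
  Index types: 'm antennas (M = CARD('m)), 'k users (K = CARD('k)),
  't training slots (tau_T = CARD('t)), 'd data slots (tau_D = CARD('d));
  the full block length is indexed by the sum type 't + 'd (Inl = training, Inr = data).\<close>

definition cgauss :: "real \<Rightarrow> complex measure" where
  "cgauss s = density lborel (\<lambda>z. ennreal (exp (- (cmod z)\<^sup>2 / s) / (pi * s)))"

definition ctrans :: "complex^'n^'m \<Rightarrow> complex^'m^'n" where
  "ctrans A = (\<chi> i j. cnj (A $ j $ i))"

definition hadamard :: "complex^'n^'m \<Rightarrow> complex^'n^'m \<Rightarrow> complex^'n^'m" where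
  "hadamard A B = (\<chi> i j. A $ i $ j * B $ i $ j)"

definition mexp :: "'w measure \<Rightarrow> ('w \<Rightarrow> complex^'n^'m) \<Rightarrow> complex^'n^'m" where
  "mexp \<Omega> F = (\<chi> i j. integral\<^sup>L \<Omega> (\<lambda>w. F w $ i $ j))"

definition vexp :: "'w measure \<Rightarrow> ('w \<Rightarrow> complex^'n) \<Rightarrow> complex^'n" where
  "vexp \<Omega> F = (\<chi> i. integral\<^sup>L \<Omega> (\<lambda>w. F w $ i))"

definition What :: "complex^'t::finite^'k \<Rightarrow> complex^'d^'k \<Rightarrow> complex^('t + 'd)^'k" where
  "What S X = (\<chi> k j. case j of Inl t \<Rightarrow> S $ k $ t | Inr d \<Rightarrow> X $ k $ d)"

text \<open>E = [E1, E2] with E1 all ones and E2 the (real, +-1) data error pattern.\<close>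
definition Efull :: "real^'d::finite^'k \<Rightarrow> complex^('t::finite + 'd)^'k" where
  "Efull E2 = (\<chi> k j. case j of Inl t \<Rightarrow> 1 | Inr d \<Rightarrow> complex_of_real (E2 $ k $ d))"

definition row :: "'k \<Rightarrow> 'a^'n^'k \<Rightarrow> 'a^'n" where
  "row k A = A $ k"

definition col :: "'k \<Rightarrow> 'a^'k^'m \<Rightarrow> 'a^'m" where
  "col k A = (\<chi> i. A $ i $ k)"

text \<open>Index set for all scalar random entries of H, E2, Z (joint independence).\<close>
datatype ('m, 'k, 't, 'd) ridx = HI 'm 'k | EI 'k 'd | ZI 'm "'t + 'd"

fun rfam :: "('w \<Rightarrow> complex^'k::finite^'m::finite) \<Rightarrow> ('w \<Rightarrow> real^'d::finite^'k) \<Rightarrow> ('w \<Rightarrow> complex^('t::finite+'d)^'m)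
              \<Rightarrow> ('m, 'k, 't, 'd) ridx \<Rightarrow> 'w \<Rightarrow> complex" where
  "rfam H E2 Z (HI i k) = (\<lambda>w. H w $ i $ k)"
| "rfam H E2 Z (EI k d) = (\<lambda>w. complex_of_real (E2 w $ k $ d))"
| "rfam H E2 Z (ZI i j) = (\<lambda>w. Z w $ i $ j)"

definition Pmat :: "'w measure \<Rightarrow> complex^'t::finite^'k::finite \<Rightarrow> complex^'d^'k \<Rightarrow> ('k \<Rightarrow> real)
                     \<Rightarrow> ('w \<Rightarrow> real^'d^'k) \<Rightarrow> complex^('t+'d)^('t+'d)" where
  "Pmat \<Omega> S X \<beta> E2 = mexp \<Omega> (\<lambda>w. ctrans (hadamard (What S X) (Efull (E2 w)))
        ** (\<chi> i j. if i = j then complex_of_real (\<beta> i) else 0)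
        ** hadamard (What S X) (Efull (E2 w)))"

definition Ccomb :: "'w measure \<Rightarrow> complex^'t::finite^'k::finite \<Rightarrow> complex^'d^'k \<Rightarrow> ('k \<Rightarrow> real) \<Rightarrow> real
                     \<Rightarrow> ('w \<Rightarrow> real^'d^'k) \<Rightarrow> 'k \<Rightarrow> complex^('t+'d)" where
  "Ccomb \<Omega> S X \<beta> N0 E2 k =
     matrix_inv (Pmat \<Omega> S X \<beta> E2 + mat (complex_of_real N0))
     *v (\<chi> j. complex_of_real (\<beta> k) *
           cnj (row k (What S X) $ j * vexp \<Omega> (\<lambda>w. row k (Efull (E2 w))) $ j))"

definition Mrx :: "complex^'k::finite^'m::finite \<Rightarrow> complex^'t::finite^'k \<Rightarrow> complex^'d^'k \<Rightarrow> real^'d^'k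
                   \<Rightarrow> complex^('t+'d)^'m \<Rightarrow> complex^('t+'d)^'m" where
  "Mrx H S X E2 Z = H ** hadamard (What S X) (Efull E2) + Z"

definition DeltaSX :: "real \<Rightarrow> ('k::finite \<Rightarrow> real) \<Rightarrow> ('k \<Rightarrow> real) \<Rightarrow> real" where
  "DeltaSX PD \<beta> BER = PD * (\<Sum>i\<in>UNIV. \<beta> i * (1 - (1 - 2 * BER i)\<^sup>2))"

definition rhoDA :: "nat \<Rightarrow> nat \<Rightarrow> real \<Rightarrow> real \<Rightarrow> real \<Rightarrow> ('k::finite \<Rightarrow> real) \<Rightarrow> ('k \<Rightarrow> real) \<Rightarrow> 'k \<Rightarrow> real" where
  "rhoDA tauT tauD PT PD N0 \<beta> BER k =
     real tauT * PT / N0 + real tauD * PD * (1 - 2 * BER k)\<^sup>2 / (DeltaSX PD \<beta> BER + N0)"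

end

theory Submission
  imports Defs
begin



lemma cnj_meas[measurable]: "cnj \<in> borel_measurable borel"
  by (rule borel_measurable_continuous_onI) (intro continuous_intros)

definition cdens :: "real \<Rightarrow> complex \<Rightarrow> real" where
  "cdens s z = exp (- (cmod z)\<^sup>2 / s) / (pi * s)"

lemma cdens_split:
  assumes s: "s > 0"
  shows "cdens s z = normal_density 0 (sqrt (s/2)) (Re z) * normal_density 0 (sqrt (s/2)) (Im z)"
proof -
  have "sqrt (2 * pi * (sqrt (s/2))\<^sup>2) = sqrt (pi * s)" using s by simp
  moreover have "sqrt (pi * s) * sqrt (pi * s) = pi * s" using s pi_gt_zero by (simp add: real_sqrt_mult_self)
  ultimately show ?thesis using s
    unfolding cdens_def normal_density_def cmod_power2
    by (simp add: exp_add[symmetric] field_simps)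
qed

lemma nn_prod_complex:
  assumes [measurable]: "f \<in> borel_measurable borel" "g \<in> borel_measurable borel"
    and "\<And>x. 0 \<le> f x" "\<And>x. 0 \<le> g x"
  shows "(\<integral>\<^sup>+z. ennreal (f (Re z) * g (Im z)) \<partial>lborel) =
         (\<integral>\<^sup>+x. ennreal (f x) \<partial>lborel) * (\<integral>\<^sup>+x. ennreal (g x) \<partial>lborel)"
proof -
  define F where "F b = (if b = (1::complex) then (\<lambda>x. ennreal (f x)) else (\<lambda>x. ennreal (g x)))" for b
  have "(\<integral>\<^sup>+z. (\<Prod>b\<in>Basis. F b (z \<bullet> b)) \<partial>lborel) = (\<Prod>b\<in>Basis. integral\<^sup>N lborel (F b))"
    by (rule nn_integral_lborel_prod) (auto simp: F_def)
  moreover have "(\<Prod>b\<in>Basis. F b (z \<bullet> b)) = ennreal (f (Re z) * g (Im z))" for z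
    using assms by (simp add: Basis_complex_def F_def ennreal_mult)
  moreover have "(\<Prod>b\<in>Basis. integral\<^sup>N lborel (F b)) = (\<integral>\<^sup>+x. ennreal (f x) \<partial>lborel) * (\<integral>\<^sup>+x. ennreal (g x) \<partial>lborel)"
    by (simp add: Basis_complex_def F_def)
  ultimately show ?thesis by simp
qed

lemma cgauss_eq: "cgauss s = density lborel (\<lambda>z. ennreal (cdens s z))"
  unfolding cgauss_def cdens_def by simp

lemma cdens_nonneg: "s > 0 \<Longrightarrow> 0 \<le> cdens s z"
  unfolding cdens_def by simp

lemma cdens_meas[measurable]: "cdens s \<in> borel_measurable borel"
  unfolding cdens_def by measurable

lemma nd_nn: "\<sigma> > 0 \<Longrightarrow> (\<integral>\<^sup>+x. ennreal (normal_density 0 \<sigma> x) \<partial>lborel) = 1"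
  by (subst nn_integral_eq_integral) (auto simp: integral_normal_density)

lemma nd_sq_nn:
  assumes "\<sigma> > 0"
  shows "(\<integral>\<^sup>+x. ennreal (normal_density 0 \<sigma> x * x\<^sup>2) \<partial>lborel) = ennreal (\<sigma>\<^sup>2)"
proof -
  have "has_bochner_integral lborel (\<lambda>x. normal_density 0 \<sigma> x * x\<^sup>2) (\<sigma>\<^sup>2)"
    using normal_moment_even[of \<sigma> 0 1] assms
    by (simp add: field_simps power2_eq_square[of x for x] mult.commute mult.left_commute)
  then show ?thesis
    by (subst nn_integral_eq_integral) (auto simp: has_bochner_integral_iff)
qed

lemma cdens_total: "s > 0 \<Longrightarrow> (\<integral>\<^sup>+z. ennreal (cdens s z) \<partial>lborel) = 1"
  by (simp add: cdens_split nn_prod_complex nd_nn)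

lemma cdens_sq: assumes s: "s > 0"
  shows "(\<integral>\<^sup>+z. ennreal (cdens s z * (cmod z)\<^sup>2) \<partial>lborel) = ennreal s"
proof -
  let ?n = "normal_density 0 (sqrt (s/2))"
  have "(\<integral>\<^sup>+z. ennreal (cdens s z * (cmod z)\<^sup>2) \<partial>lborel)
     = (\<integral>\<^sup>+z. ennreal ((?n (Re z) * (Re z)\<^sup>2) * ?n (Im z)) + ennreal (?n (Re z) * (?n (Im z) * (Im z)\<^sup>2)) \<partial>lborel)"
    using s by (intro nn_integral_cong) (simp add: cdens_split cmod_power2 ennreal_plus[symmetric] algebra_simps del: ennreal_plus)
  also have "\<dots> = (\<integral>\<^sup>+z. ennreal ((?n (Re z) * (Re z)\<^sup>2) * ?n (Im z)) \<partial>lborel) + (\<integral>\<^sup>+z. ennreal (?n (Re z) * (?n (Im z) * (Im z)\<^sup>2)) \<partial>lborel)"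
    by (rule nn_integral_add) auto
  also have "\<dots> = ennreal (s/2) + ennreal (s/2)"
    using s nn_prod_complex[of "\<lambda>x. ?n x * x\<^sup>2" ?n] nn_prod_complex[of ?n "\<lambda>x. ?n x * x\<^sup>2"]
      nd_nn[of "sqrt (s/2)"] nd_sq_nn[of "sqrt (s/2)"] by (simp add: mult.assoc)
  also have "\<dots> = ennreal s" using s by (simp add: ennreal_plus[symmetric] del: ennreal_plus)
  finally show ?thesis .
qed

lemma cgauss_prob: assumes "s > 0" shows "prob_space (cgauss s)"
proof (rule prob_spaceI)
  show "emeasure (cgauss s) (space (cgauss s)) = 1"
    using assms by (simp add: cgauss_eq emeasure_density cdens_total)
qed

lemma cgauss_sq: assumes s: "s > 0" shows "has_bochner_integral (cgauss s) (\<lambda>z. (cmod z)\<^sup>2) s"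
proof (rule has_bochner_integral_nn_integral)
  show "(\<integral>\<^sup>+ x. ennreal ((cmod x)\<^sup>2) \<partial>cgauss s) = ennreal s"
    unfolding cgauss_eq using s
    by (subst nn_integral_density) (auto simp: ennreal_mult[symmetric] cdens_nonneg cdens_sq)
qed (use s in \<open>auto simp: cgauss_eq\<close>)

lemma cgauss_sqc: assumes s: "s > 0" shows "has_bochner_integral (cgauss s) (\<lambda>z. z * cnj z) (complex_of_real s)"
proof -
  have "has_bochner_integral (cgauss s) (\<lambda>z. complex_of_real ((cmod z)\<^sup>2)) (complex_of_real s)"
    using has_bochner_integral_of_real[OF cgauss_sq[OF s]] .
  then show ?thesis by (simp add: complex_norm_square[symmetric])
qed

lemma cgauss_int: assumes s: "s > 0" shows "integrable (cgauss s) (\<lambda>z. z)"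
proof -
  interpret prob_space "cgauss s" using cgauss_prob[OF s] .
  have "integrable (cgauss s) (\<lambda>z. 1 + (cmod z)\<^sup>2)"
    using cgauss_sq[OF s] by (auto simp: has_bochner_integral_iff)
  then show ?thesis
  proof (rule Bochner_Integration.integrable_bound)
    show "AE x in cgauss s. norm x \<le> norm (1 + (cmod x)\<^sup>2)"
    proof (rule AE_I2)
      fix x :: complex
      have "cmod x \<le> 1 + (cmod x)\<^sup>2"
      proof -
        have "0 \<le> (cmod x - 1/2)\<^sup>2" by simp
        then show ?thesis by (simp add: power2_eq_square algebra_simps)
      qed
      then show "norm x \<le> norm (1 + (cmod x)\<^sup>2)" by simp
    qed
  qed (simp add: cgauss_eq)
qed

lemma cgauss_mean: assumes s: "s > 0" shows "has_bochner_integral (cgauss s) (\<lambda>z. z) 0"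
proof -
  let ?F = "\<lambda>z::complex. cdens s z *\<^sub>R z"
  have int: "integral\<^sup>L (cgauss s) (\<lambda>z. z) = integral\<^sup>L lborel ?F"
    unfolding cgauss_eq using s by (subst integral_density) (auto simp: cdens_nonneg)
  have L: "(lborel :: complex measure) = distr lborel borel uminus"
    using lborel_affine[of "-1::real" "0::complex"] by (simp add: density_1)
  have "integral\<^sup>L lborel ?F = integral\<^sup>L (distr lborel borel uminus) ?F"
    using L by simp
  also have "\<dots> = integral\<^sup>L lborel (\<lambda>z. ?F (- z))"
    by (rule integral_distr) auto
  also have "\<dots> = integral\<^sup>L lborel (\<lambda>z. - ?F z)"
    by (simp add: cdens_def)
  also have "\<dots> = - integral\<^sup>L lborel ?F" by simp
  finally have "integral\<^sup>L lborel ?F = 0" by simp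
  then show ?thesis using cgauss_int[OF s] int by (simp add: has_bochner_integral_iff)
qed



lemma split_hbi:
  fixes X :: "'i \<Rightarrow> 'a \<Rightarrow> complex" and G :: "('i \<Rightarrow> complex) \<Rightarrow> complex"
  assumes ps: "prob_space M" and ind: "prob_space.indep_vars M (\<lambda>_. borel) X UNIV"
    and rJ: "r \<notin> J"
    and fm: "f \<in> borel_measurable borel" and Gm: "G \<in> borel_measurable (PiM J (\<lambda>_. borel))"
    and hf: "has_bochner_integral M (\<lambda>w. f (X r w)) a"
    and hg: "has_bochner_integral M g b"
    and eq: "\<And>w. w \<in> space M \<Longrightarrow> G (restrict (\<lambda>i. X i w) J) = g w"
  shows "has_bochner_integral M (\<lambda>w. f (X r w) * g w) (a * b)"
proof -
  interpret prob_space M by (rule ps)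
  have iv: "indep_var (PiM {r} (\<lambda>_. borel)) (\<lambda>w. restrict (\<lambda>i. X i w) {r})
                      (PiM J (\<lambda>_. borel)) (\<lambda>w. restrict (\<lambda>i. X i w) J)"
    by (rule indep_var_restrict[OF ind]) (use rJ in auto)
  have Y1: "(\<lambda>t. f (t r)) \<in> borel_measurable (PiM {r} (\<lambda>_. borel))"
    using fm by measurable
  have iv2: "indep_var borel ((\<lambda>t. f (t r)) \<circ> (\<lambda>w. restrict (\<lambda>i. X i w) {r}))
                       borel (G \<circ> (\<lambda>w. restrict (\<lambda>i. X i w) J))"
    by (rule indep_var_compose[OF iv Y1 Gm])
  have e1: "((\<lambda>t. f (t r)) \<circ> (\<lambda>w. restrict (\<lambda>i. X i w) {r})) = (\<lambda>w. f (X r w))"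
    by auto
  have iv3: "indep_var borel (\<lambda>w. f (X r w)) borel (\<lambda>w. G (restrict (\<lambda>i. X i w) J))"
    using iv2 unfolding e1 by (simp add: comp_def)
  have i1: "integrable M (\<lambda>w. f (X r w))" using hf by (simp add: has_bochner_integral_iff)
  have i2: "integrable M (\<lambda>w. G (restrict (\<lambda>i. X i w) J))"
    using hg eq by (simp add: has_bochner_integral_iff Bochner_Integration.integrable_cong[OF refl eq])
  have v2: "integral\<^sup>L M (\<lambda>w. G (restrict (\<lambda>i. X i w) J)) = b"
    using hg eq by (simp add: has_bochner_integral_iff Bochner_Integration.integral_cong[OF refl eq])
  have "has_bochner_integral M (\<lambda>w. f (X r w) * G (restrict (\<lambda>i. X i w) J)) (a * b)"
    using indep_var_lebesgue_integral[OF iv3 i1 i2] indep_var_integrable[OF iv3 i1 i2] hf v2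
    by (simp add: has_bochner_integral_iff)
  then show ?thesis
    by (rule has_bochner_integral_cong[THEN iffD1, rotated -1]) (auto simp: eq)
qed



fun isE :: "('m, 'k, 't, 'd) ridx \<Rightarrow> bool" where
  "isE (EI _ _) = True" | "isE (HI _ _) = False" | "isE (ZI _ _) = False"

definition efn :: "'k \<Rightarrow> ('t + 'd) \<Rightarrow> (('m, 'k, 't, 'd) ridx \<Rightarrow> complex) \<Rightarrow> complex" where
  "efn i j t = (case j of Inl _ \<Rightarrow> 1 | Inr d \<Rightarrow> t (EI i d))"

lemma efn_restrict: "isE \<le> (\<lambda>r. r \<in> J) \<Longrightarrow> efn i j (restrict t J) = efn i j t"
  by (cases j) (auto simp: efn_def le_fun_def)

lemma efn_meas[measurable]:
  assumes "\<And>d. EI i d \<in> J"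
  shows "efn i j \<in> borel_measurable (PiM J (\<lambda>_. borel))"
proof (cases j)
  case (Inr d)
  have "efn i j = (\<lambda>t. t (EI i d))" by (simp add: efn_def fun_eq_iff Inr)
  show ?thesis unfolding \<open>efn i j = (\<lambda>t. t (EI i d))\<close> by (rule measurable_component_singleton) (rule assms)
next
  case (Inl a)
  have e: "efn i j = (\<lambda>t. 1)" by (simp add: efn_def fun_eq_iff Inl)
  show ?thesis unfolding e by (rule measurable_const) simp
qed

locale sys =
  fixes \<Omega> :: "'w measure"
    and H :: "'w \<Rightarrow> complex^'k::finite^'m::finite"
    and E2 :: "'w \<Rightarrow> real^'d::finite^'k"
    and Z :: "'w \<Rightarrow> complex^('t::finite + 'd)^'m"
    and S :: "complex^'t^'k" and X :: "complex^'d^'k"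
    and \<beta> BER :: "'k \<Rightarrow> real" and N0 PD PT :: real and k :: 'k
  assumes ps: "prob_space \<Omega>"
    and N0: "N0 > 0" and PD: "PD > 0" and PT: "PT > 0"
    and beta: "\<And>i. \<beta> i > 0"
    and BER: "\<And>i. 0 \<le> BER i \<and> BER i \<le> 1"
    and Xmod: "\<And>i j. (cmod (X $ i $ j))\<^sup>2 = PD"
    and SS: "S ** ctrans S = mat (complex_of_real (real CARD('t) * PT))"
    and XX: "X ** ctrans X = mat (complex_of_real (real CARD('d) * PD))"
    and indep: "prob_space.indep_vars \<Omega> (\<lambda>_. borel) (rfam H E2 Z) UNIV"
    and Hdist: "\<And>i j. distr \<Omega> borel (\<lambda>w. H w $ i $ j) = cgauss (\<beta> j)"
    and Zdist: "\<And>i j. distr \<Omega> borel (\<lambda>w. Z w $ i $ j) = cgauss N0"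
    and Eval: "\<And>w i j. w \<in> space \<Omega> \<Longrightarrow> E2 w $ i $ j = 1 \<or> E2 w $ i $ j = -1"
    and Eprob: "\<And>i j. measure \<Omega> {w \<in> space \<Omega>. E2 w $ i $ j = -1} = BER i"
begin

interpretation P: prob_space \<Omega> by (rule ps)

abbreviation "rf \<equiv> rfam H E2 Z"
abbreviation "Xr w \<equiv> (\<lambda>r. rf r w)"
abbreviation "EIs \<equiv> Collect (isE :: ('m, 'k, 't, 'd) ridx \<Rightarrow> bool)"

lemma rf_meas[measurable]: "rf r \<in> borel_measurable \<Omega>"
  using indep unfolding P.indep_vars_def by auto

lemma H_meas[measurable]: "(\<lambda>w. H w $ a $ i) \<in> borel_measurable \<Omega>"
  using rf_meas[of "HI a i"] by simp
lemma Z_meas[measurable]: "(\<lambda>w. Z w $ a $ i) \<in> borel_measurable \<Omega>"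
  using rf_meas[of "ZI a i"] by simp
lemma E_meas[measurable]: "(\<lambda>w. E2 w $ i $ d) \<in> borel_measurable \<Omega>"
proof -
  have "(\<lambda>w. Re (rf (EI i d) w)) \<in> borel_measurable \<Omega>" by measurable
  then show ?thesis by simp
qed

lemma Xr_meas[measurable]: "(\<lambda>w. Xr w r) \<in> borel_measurable \<Omega>" by simp

lemma efn_Xr_meas[measurable]: "(\<lambda>w. efn i j (Xr w)) \<in> borel_measurable \<Omega>"
  by (cases j) (auto simp: efn_def)

lemma Efull_efn: "Efull (E2 w) $ i $ j = efn i j (Xr w)"
  by (cases j) (auto simp: Efull_def efn_def)

lemma efn_val: "w \<in> space \<Omega> \<Longrightarrow> efn i j (Xr w) = 1 \<or> efn i j (Xr w) = -1"
proof (cases j)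
  case (Inr d)
  assume "w \<in> space \<Omega>"
  then have "E2 w $ i $ d = 1 \<or> E2 w $ i $ d = -1" by (rule Eval)
  then show ?thesis by (auto simp: efn_def Inr)
qed (simp add: efn_def)

lemma efn_sq: "w \<in> space \<Omega> \<Longrightarrow> efn i j (Xr w) * efn i j (Xr w) = 1"
  using efn_val[of w i j] by auto

lemma efn_cnj: "w \<in> space \<Omega> \<Longrightarrow> cnj (efn i j (Xr w)) = efn i j (Xr w)"
  using efn_val[of w i j] by auto

lemma efn_norm: "w \<in> space \<Omega> \<Longrightarrow> norm (efn i j (Xr w)) = 1"
  using efn_val[of w i j] by auto

definition "W = What S X"
definition "Cc = Ccomb \<Omega> S X \<beta> N0 E2 k"
definition "cE i t = (\<Sum>j\<in>UNIV. W$i$j * Cc$j * efn i j t) - (if i = k then 1 else 0)"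

lemma cE_restrict: "isE \<le> (\<lambda>r. r \<in> J) \<Longrightarrow> cE i (restrict t J) = cE i t"
  by (simp add: cE_def efn_restrict)

lemma cE_meas[measurable]:
  assumes "\<And>d. EI i d \<in> J"
  shows "cE i \<in> borel_measurable (PiM J (\<lambda>_. borel))"
  unfolding cE_def using assms by measurable

lemma cE_Xr_meas[measurable]: "(\<lambda>w. cE i (Xr w)) \<in> borel_measurable \<Omega>"
  unfolding cE_def by measurable

lemma v_expand:
  "(Mrx (H w) S X (E2 w) (Z w) *v Cc - col k (H w)) $ a
     = (\<Sum>i\<in>UNIV. H w$a$i * cE i (Xr w)) + (\<Sum>j\<in>UNIV. Z w$a$j * Cc$j)"
proof -
  have "(Mrx (H w) S X (E2 w) (Z w) *v Cc) $ a
        = (\<Sum>j\<in>UNIV. (\<Sum>i\<in>UNIV. H w$a$i * (W$i$j * efn i j (Xr w))) * Cc$j) + (\<Sum>j\<in>UNIV. Z w$a$j * Cc$j)"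
    by (simp add: Mrx_def matrix_vector_mult_def matrix_matrix_mult_def hadamard_def Efull_efn W_def
        sum.distrib algebra_simps)
  also have "(\<Sum>j\<in>UNIV. (\<Sum>i\<in>UNIV. H w$a$i * (W$i$j * efn i j (Xr w))) * Cc$j)
      = (\<Sum>i\<in>UNIV. H w$a$i * (\<Sum>j\<in>UNIV. W$i$j * Cc$j * efn i j (Xr w)))"
    by (simp add: sum_distrib_left sum_distrib_right algebra_simps) (rule sum.swap)
  finally show ?thesis
    by (simp add: cE_def col_def right_diff_distrib sum_subtractf if_distrib[of "\<lambda>x. _ * x"] cong: if_cong)
qed

lemma hbi_from_distr:
  fixes Y :: "'w \<Rightarrow> complex" and g :: "complex \<Rightarrow> complex"
  assumes Ym: "Y \<in> borel_measurable \<Omega>" and D: "distr \<Omega> borel Y = Q"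
    and gm: "g \<in> borel_measurable borel" and h: "has_bochner_integral Q g x"
  shows "has_bochner_integral \<Omega> (\<lambda>w. g (Y w)) x"
proof -
  have "integrable (distr \<Omega> borel Y) g" "integral\<^sup>L (distr \<Omega> borel Y) g = x"
    using h D by (auto simp: has_bochner_integral_iff)
  then show ?thesis
    using integrable_distr_eq[OF Ym gm] integral_distr[OF Ym gm] by (simp add: has_bochner_integral_iff)
qed

lemma H0: "has_bochner_integral \<Omega> (\<lambda>w. H w$a$i) 0"
  using hbi_from_distr[OF H_meas Hdist _ cgauss_mean[OF beta]] by simp
lemma Hc0: "has_bochner_integral \<Omega> (\<lambda>w. cnj (H w$a$i)) 0"
  using has_bochner_integral_cnj[OF H0] by simp
lemma H2: "has_bochner_integral \<Omega> (\<lambda>w. H w$a$i * cnj (H w$a$i)) (complex_of_real (\<beta> i))"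
  using hbi_from_distr[OF H_meas Hdist _ cgauss_sqc[OF beta]] by simp
lemma Z0: "has_bochner_integral \<Omega> (\<lambda>w. Z w$a$i) 0"
  using hbi_from_distr[OF Z_meas Zdist _ cgauss_mean[OF N0]] by simp
lemma Zc0: "has_bochner_integral \<Omega> (\<lambda>w. cnj (Z w$a$i)) 0"
  using has_bochner_integral_cnj[OF Z0] by simp
lemma Z2: "has_bochner_integral \<Omega> (\<lambda>w. Z w$a$i * cnj (Z w$a$i)) (complex_of_real N0)"
  using hbi_from_distr[OF Z_meas Zdist _ cgauss_sqc[OF N0]] by simp

definition "mc i j = (case j of Inl _ \<Rightarrow> 1 | Inr d \<Rightarrow> complex_of_real (1 - 2 * BER i))"
definition "Mom i j l = (if j = l then 1 else mc i j * mc i l)"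

lemma cnj_mc[simp]: "cnj (mc i j) = mc i j"
  by (cases j) (auto simp: mc_def)

lemma Em: "has_bochner_integral \<Omega> (\<lambda>w. efn i j (Xr w)) (mc i j)"
proof (cases j)
  case (Inl a)
  then show ?thesis using P.prob_space by (simp add: efn_def mc_def has_bochner_integral_iff)
next
  case (Inr d)
  define A where "A = {w \<in> space \<Omega>. E2 w $ i $ d = -1}"
  have A: "A \<in> sets \<Omega>" unfolding A_def by measurable
  have "has_bochner_integral \<Omega> (\<lambda>w. 1 - 2 * indicator A w) (1 - 2 * measure \<Omega> A)"
    using A P.prob_space P.emeasure_eq_measure[of A]
    by (intro has_bochner_integral_diff has_bochner_integral_mult_right has_bochner_integral_real_indicator)
       (auto simp: has_bochner_integral_iff)
  then have "has_bochner_integral \<Omega> (\<lambda>w. E2 w $ i $ d) (1 - 2 * BER i)"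
  proof (rule has_bochner_integral_cong[THEN iffD1, rotated -1])
    fix w assume "w \<in> space \<Omega>"
    then show "1 - 2 * indicator A w = E2 w $ i $ d"
      using Eval[of w i d] by (auto simp: A_def indicator_def)
  qed (auto simp: A_def Eprob)
  then show ?thesis
    using has_bochner_integral_of_real by (fastforce simp: efn_def mc_def Inr)
qed

lemmas split = split_hbi[OF ps indep]

lemma Emom: "has_bochner_integral \<Omega> (\<lambda>w. efn i j (Xr w) * efn i l (Xr w)) (Mom i j l)"
proof (cases "j = l")
  case True
  show ?thesis
  proof (rule has_bochner_integral_cong[THEN iffD1, rotated -1])
    show "has_bochner_integral \<Omega> (\<lambda>w. 1::complex) 1"
      using P.prob_space by (simp add: has_bochner_integral_iff)
  qed (auto simp: efn_sq Mom_def True)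
next
  case False
  show ?thesis
  proof (cases j)
    case (Inl a)
    then show ?thesis using False Em[of i l] by (simp add: efn_def Mom_def mc_def)
  next
    case (Inr d)
    show ?thesis
    proof (cases l)
      case (Inl b)
      then show ?thesis using False Em[of i j] by (simp add: efn_def Mom_def mc_def)
    next
      case (Inr d')
      have "has_bochner_integral \<Omega> (\<lambda>w. (\<lambda>z. z) (rf (EI i d) w) * efn i l (Xr w)) (mc i j * mc i l)"
      proof (rule split[where J="{EI i d'}" and G="\<lambda>t. t (EI i d')"])
        show "has_bochner_integral \<Omega> (\<lambda>w. rf (EI i d) w) (mc i j)"
          using Em[of i j] by (simp add: efn_def \<open>j = Inr d\<close>)
      qed (use False \<open>j = Inr d\<close> Inr Em[of i l] in \<open>auto simp: efn_def\<close>)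
      then show ?thesis using False \<open>j = Inr d\<close> by (simp add: Mom_def efn_def)
    qed
  qed
qed

lemma hbi_const: "has_bochner_integral \<Omega> (\<lambda>w. c) (c :: complex)"
  using P.prob_space by (simp add: has_bochner_integral_iff)

definition "Bd i = (\<Sum>j\<in>UNIV. cmod (W$i$j) * cmod (Cc$j)) + 1"

lemma Bd_nonneg: "0 \<le> Bd i"
  unfolding Bd_def by (intro add_nonneg_nonneg sum_nonneg) auto

lemma cE_bnd: "w \<in> space \<Omega> \<Longrightarrow> norm (cE i (Xr w)) \<le> Bd i"
proof -
  assume w: "w \<in> space \<Omega>"
  have "norm (cE i (Xr w)) \<le> norm (\<Sum>j\<in>UNIV. W$i$j * Cc$j * efn i j (Xr w)) + norm (if i = k then 1 else (0::complex))"
    unfolding cE_def by (rule norm_triangle_ineq4)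
  also have "\<dots> \<le> (\<Sum>j\<in>UNIV. norm (W$i$j * Cc$j * efn i j (Xr w))) + 1"
    by (intro add_mono norm_sum) auto
  also have "\<dots> = Bd i"
    using w by (simp add: Bd_def norm_mult efn_norm)
  finally show ?thesis .
qed

lemma int_cc: "integrable \<Omega> (\<lambda>w. cE i (Xr w) * cnj (cE i' (Xr w)))"
proof (rule P.integrable_const_bound[where B="Bd i * Bd i'"])
  show "AE x in \<Omega>. norm (cE i (Xr x) * cnj (cE i' (Xr x))) \<le> Bd i * Bd i'"
    by (rule AE_I2) (auto simp: norm_mult Bd_nonneg intro!: mult_mono cE_bnd)
qed measurable

lemma int_c: "integrable \<Omega> (\<lambda>w. c * cE i (Xr w))"
proof (rule P.integrable_const_bound[where B="norm c * Bd i"])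
  show "AE x in \<Omega>. norm (c * cE i (Xr x)) \<le> norm c * Bd i"
    by (rule AE_I2) (auto simp: norm_mult intro!: mult_left_mono cE_bnd)
qed measurable

lemma int_cc': "integrable \<Omega> (\<lambda>w. c * cnj (cE i (Xr w)))"
proof (rule P.integrable_const_bound[where B="norm c * Bd i"])
  show "AE x in \<Omega>. norm (c * cnj (cE i (Xr x))) \<le> norm c * Bd i"
    by (rule AE_I2) (auto simp: norm_mult intro!: mult_left_mono cE_bnd)
qed measurable

definition "dk i = (if i = k then 1 else (0::complex))"

definition "Vval i = (\<Sum>j\<in>UNIV. \<Sum>l\<in>UNIV. W$i$j * Cc$j * cnj (W$i$l * Cc$l) * Mom i j l)
   - dk i * (\<Sum>l\<in>UNIV. cnj (W$i$l * Cc$l) * mc i l) - dk i * (\<Sum>j\<in>UNIV. W$i$j * Cc$j * mc i j) + dk i"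

lemma Vc_hbi: "has_bochner_integral \<Omega> (\<lambda>w. cE i (Xr w) * cnj (cE i (Xr w))) (Vval i)"
proof -
  have "has_bochner_integral \<Omega> (\<lambda>w. (\<Sum>j\<in>UNIV. \<Sum>l\<in>UNIV. W$i$j * Cc$j * cnj (W$i$l * Cc$l) * (efn i j (Xr w) * efn i l (Xr w)))
     - dk i * (\<Sum>l\<in>UNIV. cnj (W$i$l * Cc$l) * efn i l (Xr w)) - dk i * (\<Sum>j\<in>UNIV. W$i$j * Cc$j * efn i j (Xr w)) + dk i) (Vval i)"
    unfolding Vval_def
    by (intro has_bochner_integral_add has_bochner_integral_diff has_bochner_integral_sum
        has_bochner_integral_mult_right Emom Em hbi_const)
  then show ?thesis
  proof (rule has_bochner_integral_cong[THEN iffD1, rotated -1])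
    fix w assume w: "w \<in> space \<Omega>"
    let ?A = "\<Sum>j\<in>UNIV. W$i$j * Cc$j * efn i j (Xr w)"
    let ?B = "\<Sum>l\<in>UNIV. cnj (W$i$l * Cc$l) * efn i l (Xr w)"
    have e1: "cE i (Xr w) = ?A - dk i" by (simp add: cE_def dk_def)
    have e2: "cnj (?A - dk i) = ?B - dk i"
      using w by (simp add: cE_def dk_def efn_cnj cnj_sum)
    have e3: "?A * ?B = (\<Sum>j\<in>UNIV. \<Sum>l\<in>UNIV. W$i$j * Cc$j * cnj (W$i$l * Cc$l) * (efn i j (Xr w) * efn i l (Xr w)))"
      by (simp only: sum_product) (simp add: mult_ac)
    have e4: "dk i * dk i = dk i" by (simp add: dk_def)
    show "(\<Sum>j\<in>UNIV. \<Sum>l\<in>UNIV. W$i$j * Cc$j * cnj (W$i$l * Cc$l) * (efn i j (Xr w) * efn i l (Xr w)))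
     - dk i * (\<Sum>l\<in>UNIV. cnj (W$i$l * Cc$l) * efn i l (Xr w)) - dk i * (\<Sum>j\<in>UNIV. W$i$j * Cc$j * efn i j (Xr w)) + dk i
      = cE i (Xr w) * cnj (cE i (Xr w))"
      unfolding e1 e2 e3[symmetric] using e4 by (simp add: algebra_simps)
  qed auto
qed

end


context sys begin
interpretation P: prob_space \<Omega> by (rule ps)
lemma isE_le: "isE \<le> (\<lambda>r. r \<in> insert x EIs)" "isE \<le> (\<lambda>r. r \<in> EIs)"
  by (auto simp: le_fun_def)

lemma cE_restrict_ins: "cE i (restrict t (insert x EIs)) = cE i t"
  by (rule cE_restrict) (auto simp: le_fun_def)
lemma cE_restrict_E: "cE i (restrict t EIs) = cE i t"
  by (rule cE_restrict) (auto simp: le_fun_def)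

lemma case_II: "has_bochner_integral \<Omega> (\<lambda>w. (H w$a$i * cE i (Xr w)) * cnj (H w$a$i * cE i (Xr w)))
   (complex_of_real (\<beta> i) * Vval i)"
proof -
  have "has_bochner_integral \<Omega> (\<lambda>w. (\<lambda>z. z * cnj z) (rf (HI a i) w) * (cE i (Xr w) * cnj (cE i (Xr w))))
      (complex_of_real (\<beta> i) * Vval i)"
    by (rule split[where J=EIs and G="\<lambda>t. cE i t * cnj (cE i t)"])
       (use H2 Vc_hbi in \<open>auto simp: cE_restrict_ins cE_restrict_E\<close>)
  then show ?thesis by (simp add: algebra_simps)
qed

lemma case_IIn: assumes "i \<noteq> i'"
  shows "has_bochner_integral \<Omega> (\<lambda>w. (H w$a$i * cE i (Xr w)) * cnj (H w$a$i' * cE i' (Xr w))) 0"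
proof -
  have g: "has_bochner_integral \<Omega> (\<lambda>w. cnj (rf (HI a i') w) * (cE i (Xr w) * cnj (cE i' (Xr w)))) (0 * integral\<^sup>L \<Omega> (\<lambda>w. cE i (Xr w) * cnj (cE i' (Xr w))))"
    by (rule split[where J=EIs and G="\<lambda>t. cE i t * cnj (cE i' t)" and f=cnj])
       (use Hc0 int_cc[THEN has_bochner_integral_integrable] in \<open>auto simp: cE_restrict_ins cE_restrict_E\<close>)
  have "has_bochner_integral \<Omega> (\<lambda>w. (\<lambda>z. z) (rf (HI a i) w) * (cnj (rf (HI a i') w) * (cE i (Xr w) * cnj (cE i' (Xr w))))) (0 * 0)"
    by (rule split[where J="insert (HI a i') EIs" and G="\<lambda>t. cnj (t (HI a i')) * (cE i t * cnj (cE i' t))"])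
       (use H0 g assms in \<open>auto simp: cE_restrict_ins cE_restrict_E\<close>)
  then show ?thesis by (simp add: algebra_simps)
qed

lemma case_IJ: "has_bochner_integral \<Omega> (\<lambda>w. (H w$a$i * cE i (Xr w)) * cnj (Z w$a$j * Cc$j)) 0"
proof -
  have g: "has_bochner_integral \<Omega> (\<lambda>w. cnj (rf (ZI a j) w) * (cnj (Cc$j) * cE i (Xr w))) (0 * integral\<^sup>L \<Omega> (\<lambda>w. cnj (Cc$j) * cE i (Xr w)))"
    by (rule split[where J=EIs and G="\<lambda>t. cnj (Cc$j) * cE i t" and f=cnj])
       (use Zc0 int_c[of "cnj (Cc$j)" i, THEN has_bochner_integral_integrable] in \<open>auto simp: cE_restrict_ins cE_restrict_E\<close>)
  have "has_bochner_integral \<Omega> (\<lambda>w. (\<lambda>z. z) (rf (HI a i) w) * (cnj (rf (ZI a j) w) * (cnj (Cc$j) * cE i (Xr w)))) (0 * 0)"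
    by (rule split[where J="insert (ZI a j) EIs" and G="\<lambda>t. cnj (t (ZI a j)) * (cnj (Cc$j) * cE i t)"])
       (use H0 g in \<open>auto simp: cE_restrict_ins cE_restrict_E\<close>)
  then show ?thesis by (simp add: algebra_simps)
qed

lemma case_JI: "has_bochner_integral \<Omega> (\<lambda>w. (Z w$a$j * Cc$j) * cnj (H w$a$i * cE i (Xr w))) 0"
proof -
  have g: "has_bochner_integral \<Omega> (\<lambda>w. cnj (rf (HI a i) w) * (Cc$j * cnj (cE i (Xr w)))) (0 * integral\<^sup>L \<Omega> (\<lambda>w. Cc$j * cnj (cE i (Xr w))))"
    by (rule split[where J=EIs and G="\<lambda>t. Cc$j * cnj (cE i t)" and f=cnj])
       (use Hc0 int_cc'[of "Cc$j" i, THEN has_bochner_integral_integrable] in \<open>auto simp: cE_restrict_ins cE_restrict_E\<close>)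
  have "has_bochner_integral \<Omega> (\<lambda>w. (\<lambda>z. z) (rf (ZI a j) w) * (cnj (rf (HI a i) w) * (Cc$j * cnj (cE i (Xr w))))) (0 * 0)"
    by (rule split[where J="insert (HI a i) EIs" and G="\<lambda>t. cnj (t (HI a i)) * (Cc$j * cnj (cE i t))"])
       (use Z0 g in \<open>auto simp: cE_restrict_ins cE_restrict_E\<close>)
  then show ?thesis by (simp add: algebra_simps)
qed

lemma case_JJ: "has_bochner_integral \<Omega> (\<lambda>w. (Z w$a$j * Cc$j) * cnj (Z w$a$j * Cc$j))
   (complex_of_real N0 * (Cc$j * cnj (Cc$j)))"
  using has_bochner_integral_mult_left[OF Z2[of a j], of "Cc$j * cnj (Cc$j)"]
  by (simp add: algebra_simps)

lemma case_JJn: assumes "j \<noteq> j'"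
  shows "has_bochner_integral \<Omega> (\<lambda>w. (Z w$a$j * Cc$j) * cnj (Z w$a$j' * Cc$j')) 0"
proof -
  have "has_bochner_integral \<Omega> (\<lambda>w. (\<lambda>z. z) (rf (ZI a j) w) * (cnj (rf (ZI a j') w) * (Cc$j * cnj (Cc$j')))) (0 * 0)"
    by (rule split[where J="{ZI a j'}" and G="\<lambda>t. cnj (t (ZI a j')) * (Cc$j * cnj (Cc$j'))"])
       (use Z0 Zc0[THEN has_bochner_integral_mult_left] assms in auto)
  then show ?thesis by (simp add: algebra_simps)
qed

lemma prod_cnj_sum: "(\<Sum>i\<in>A. f i) * cnj (\<Sum>j\<in>B. g j) = (\<Sum>i\<in>A. \<Sum>j\<in>B. f i * cnj (g j))"
  by (simp add: cnj_sum sum_product)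

definition "Qv = (\<Sum>i\<in>UNIV. complex_of_real (\<beta> i) * Vval i) + (\<Sum>j\<in>UNIV. complex_of_real N0 * (Cc$j * cnj (Cc$j)))"

abbreviation "vv w \<equiv> Mrx (H w) S X (E2 w) (Z w) *v Cc - col k (H w)"

lemma row_hbi_c: "has_bochner_integral \<Omega> (\<lambda>w. vv w $ a * cnj (vv w $ a)) Qv"
proof -
  let ?A = "\<lambda>i w. H w$a$i * cE i (Xr w)"
  let ?B = "\<lambda>j w. Z w$a$j * Cc$j"
  have 1: "has_bochner_integral \<Omega> (\<lambda>w. \<Sum>i\<in>UNIV. \<Sum>i'\<in>UNIV. ?A i w * cnj (?A i' w))
      (\<Sum>i\<in>UNIV. \<Sum>i'\<in>UNIV. if i = i' then complex_of_real (\<beta> i) * Vval i else 0)"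
  proof (intro has_bochner_integral_sum)
    fix i i' show "has_bochner_integral \<Omega> (\<lambda>w. ?A i w * cnj (?A i' w)) (if i = i' then complex_of_real (\<beta> i) * Vval i else 0)"
      using case_II[of a i] case_IIn[of i i' a] by (cases "i = i'") simp_all
  qed
  have 2: "has_bochner_integral \<Omega> (\<lambda>w. \<Sum>i\<in>UNIV. \<Sum>j\<in>UNIV. ?A i w * cnj (?B j w)) (\<Sum>i\<in>(UNIV::'k set). \<Sum>j\<in>(UNIV::('t+'d) set). 0)"
  proof (intro has_bochner_integral_sum)
    fix i j show "has_bochner_integral \<Omega> (\<lambda>w. ?A i w * cnj (?B j w)) 0" by (rule case_IJ)
  qed
  have 3: "has_bochner_integral \<Omega> (\<lambda>w. \<Sum>j\<in>UNIV. \<Sum>i\<in>UNIV. ?B j w * cnj (?A i w)) (\<Sum>j\<in>(UNIV::('t+'d) set). \<Sum>i\<in>(UNIV::'k set). 0)"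
  proof (intro has_bochner_integral_sum)
    fix i j show "has_bochner_integral \<Omega> (\<lambda>w. ?B j w * cnj (?A i w)) 0" by (rule case_JI)
  qed
  have 4: "has_bochner_integral \<Omega> (\<lambda>w. \<Sum>j\<in>UNIV. \<Sum>j'\<in>UNIV. ?B j w * cnj (?B j' w))
      (\<Sum>j\<in>UNIV. \<Sum>j'\<in>UNIV. if j = j' then complex_of_real N0 * (Cc$j * cnj (Cc$j)) else 0)"
  proof (intro has_bochner_integral_sum)
    fix j j' show "has_bochner_integral \<Omega> (\<lambda>w. ?B j w * cnj (?B j' w)) (if j = j' then complex_of_real N0 * (Cc$j * cnj (Cc$j)) else 0)"
      using case_JJ[of a j] case_JJn[of j j' a] by (cases "j = j'") simp_all
  qed
  have "has_bochner_integral \<Omega> (\<lambda>w. (\<Sum>i\<in>UNIV. \<Sum>i'\<in>UNIV. ?A i w * cnj (?A i' w)) + (\<Sum>i\<in>UNIV. \<Sum>j\<in>UNIV. ?A i w * cnj (?B j w))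
     + (\<Sum>j\<in>UNIV. \<Sum>i\<in>UNIV. ?B j w * cnj (?A i w)) + (\<Sum>j\<in>UNIV. \<Sum>j'\<in>UNIV. ?B j w * cnj (?B j' w))) Qv"
    using has_bochner_integral_add[OF has_bochner_integral_add[OF has_bochner_integral_add[OF 1 2] 3] 4]
    by (simp add: Qv_def)
  moreover have "vv w $ a * cnj (vv w $ a) = (\<Sum>i\<in>UNIV. \<Sum>i'\<in>UNIV. ?A i w * cnj (?A i' w)) + (\<Sum>i\<in>UNIV. \<Sum>j\<in>UNIV. ?A i w * cnj (?B j w))
     + (\<Sum>j\<in>UNIV. \<Sum>i\<in>UNIV. ?B j w * cnj (?A i w)) + (\<Sum>j\<in>UNIV. \<Sum>j'\<in>UNIV. ?B j w * cnj (?B j' w))" for w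
  proof -
    have e: "vv w $ a * cnj (vv w $ a) = (\<Sum>i\<in>UNIV. ?A i w) * cnj (\<Sum>i\<in>UNIV. ?A i w) + (\<Sum>i\<in>UNIV. ?A i w) * cnj (\<Sum>j\<in>UNIV. ?B j w)
        + (\<Sum>j\<in>UNIV. ?B j w) * cnj (\<Sum>i\<in>UNIV. ?A i w) + (\<Sum>j\<in>UNIV. ?B j w) * cnj (\<Sum>j\<in>UNIV. ?B j w)"
      unfolding v_expand complex_cnj_add by (simp only: distrib_left distrib_right add_ac)
    show ?thesis unfolding e prod_cnj_sum ..
  qed
  ultimately show ?thesis by simp
qed

lemma cmod_sq_Re: "Re (z * cnj z) = (cmod z)\<^sup>2"
  by (subst complex_norm_square[symmetric]) (simp only: Re_complex_of_real)

lemma row_hbi: "has_bochner_integral \<Omega> (\<lambda>w. (cmod (vv w $ a))\<^sup>2) (Re Qv)"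
  using has_bochner_integral_Re[OF row_hbi_c[of a]] by (simp only: cmod_sq_Re)

lemma mse_hbi: "has_bochner_integral \<Omega> (\<lambda>w. (norm (vv w))\<^sup>2) (real CARD('m) * Re Qv)"
proof -
  have "has_bochner_integral \<Omega> (\<lambda>w. \<Sum>a\<in>UNIV. (cmod (vv w $ a))\<^sup>2) (\<Sum>a\<in>(UNIV::'m set). Re Qv)"
    by (intro has_bochner_integral_sum row_hbi)
  moreover have "(norm (vv w))\<^sup>2 = (\<Sum>a\<in>UNIV. (cmod (vv w $ a))\<^sup>2)" for w
    by (simp add: norm_vec_def L2_set_def sum_nonneg)
  ultimately show ?thesis by simp
qed

lemma hh_hbi: "has_bochner_integral \<Omega> (\<lambda>w. (norm (col k (H w)))\<^sup>2) (real CARD('m) * \<beta> k)"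
proof -
  have "has_bochner_integral \<Omega> (\<lambda>w. \<Sum>a\<in>UNIV. Re (H w$a$k * cnj (H w$a$k))) (\<Sum>a\<in>(UNIV::'m set). Re (complex_of_real (\<beta> k)))"
    by (intro has_bochner_integral_sum has_bochner_integral_Re H2)
  moreover have "(norm (col k (H w)))\<^sup>2 = (\<Sum>a\<in>UNIV. Re (H w$a$k * cnj (H w$a$k)))" for w
    by (simp add: norm_vec_def L2_set_def sum_nonneg col_def complex_norm_square[symmetric] del: of_real_power)
  ultimately show ?thesis by simp
qed

end



lemma sum_UNIV_Plus: "(\<Sum>j\<in>(UNIV::('a::finite+'b::finite) set). f j) = (\<Sum>t\<in>UNIV. f (Inl t)) + (\<Sum>d\<in>UNIV. f (Inr d))"
  by (simp add: UNIV_Plus_UNIV[symmetric] sum.Plus del: UNIV_Plus_UNIV)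

context sys begin

definition "At i j = W$i$j * mc i j"
definition "Lam j = (case j of Inl _ \<Rightarrow> N0 | Inr _ \<Rightarrow> DeltaSX PD \<beta> BER + N0)"
definition "rho = rhoDA CARD('t) CARD('d) PT PD N0 \<beta> BER k"
definition "tt = \<beta> k / (1 + rho * \<beta> k)"
definition "Gm = (\<chi> l j. (\<Sum>i\<in>UNIV. complex_of_real (\<beta> i) * cnj (W$i$l) * W$i$j * Mom i l j) + (if l = j then complex_of_real N0 else 0))"
definition "av = (\<chi> j. complex_of_real (\<beta> k) * cnj (At k j))"
definition "yv = (\<chi> j. complex_of_real (tt / Lam j) * cnj (At k j))"

lemma DS_nonneg: "0 \<le> DeltaSX PD \<beta> BER"
proof -
  have "0 \<le> \<beta> i * (1 - (1 - 2 * BER i)\<^sup>2)" for i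
  proof -
    have h: "0 \<le> BER i * (1 - BER i)" using BER[of i] by simp
    have "(1 - 2 * BER i)\<^sup>2 \<le> 1" using h by (simp add: power2_eq_square algebra_simps)
    then show ?thesis using beta[of i] by simp
  qed
  then show ?thesis unfolding DeltaSX_def using PD by (simp add: sum_nonneg)
qed

lemma Lam_pos: "Lam j > 0"
  using N0 DS_nonneg by (cases j) (auto simp: Lam_def)

lemma rho_nonneg: "0 \<le> rho"
  unfolding rho_def rhoDA_def using N0 PT PD DS_nonneg
  by (intro add_nonneg_nonneg divide_nonneg_pos mult_nonneg_nonneg) auto

lemma W_Inl: "W$i$(Inl t) = S$i$t" by (simp add: W_def What_def)
lemma W_Inr: "W$i$(Inr d) = X$i$d" by (simp add: W_def What_def)

lemma R_lemma: "(\<Sum>j\<in>UNIV. At i j * cnj (At k j) / complex_of_real (Lam j)) = (if i = k then complex_of_real rho else 0)"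
proof -
  have SSe: "(\<Sum>t\<in>UNIV. S$i$t * cnj (S$k$t)) = (if i = k then complex_of_real (real CARD('t) * PT) else 0)"
    using arg_cong[OF SS, of "\<lambda>A. A $ i $ k"] by (simp add: matrix_matrix_mult_def ctrans_def mat_def)
  have XXe: "(\<Sum>d\<in>UNIV. X$i$d * cnj (X$k$d)) = (if i = k then complex_of_real (real CARD('d) * PD) else 0)"
    using arg_cong[OF XX, of "\<lambda>A. A $ i $ k"] by (simp add: matrix_matrix_mult_def ctrans_def mat_def)
  have "(\<Sum>j\<in>UNIV. At i j * cnj (At k j) / complex_of_real (Lam j))
     = (\<Sum>t\<in>UNIV. S$i$t * cnj (S$k$t)) / complex_of_real N0
       + complex_of_real ((1 - 2 * BER i) * (1 - 2 * BER k)) * (\<Sum>d\<in>UNIV. X$i$d * cnj (X$k$d)) / complex_of_real (DeltaSX PD \<beta> BER + N0)"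
    by (simp add: sum_UNIV_Plus At_def W_Inl W_Inr mc_def Lam_def sum_divide_distrib sum_distrib_left mult_ac)
  also have "\<dots> = (if i = k then complex_of_real rho else 0)"
    unfolding SSe XXe rho_def rhoDA_def by (simp add: power2_eq_square mult_ac)
  finally show ?thesis .
qed


lemma diag_lemma: "(\<Sum>i\<in>UNIV. complex_of_real (\<beta> i) * (cnj (W$i$l) * W$i$l) * (1 - mc i l * mc i l)) + complex_of_real N0
   = complex_of_real (Lam l)"
proof (cases l)
  case (Inl t)
  then show ?thesis by (simp add: mc_def Lam_def)
next
  case (Inr d)
  have "cnj (X$i$d) * X$i$d = complex_of_real PD" for i
    using Xmod[of i d] by (simp add: complex_norm_square[symmetric] mult.commute)
  then show ?thesis
    by (simp add: Inr mc_def Lam_def W_Inr DeltaSX_def sum_distrib_left power2_eq_square mult_ac)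
qed

lemma Gm_eq: "Gm $ l $ j = (\<Sum>i\<in>UNIV. complex_of_real (\<beta> i) * cnj (At i l) * At i j) + (if l = j then complex_of_real (Lam l) else 0)"
proof (cases "l = j")
  case True
  have "Gm $ l $ j = (\<Sum>i\<in>UNIV. complex_of_real (\<beta> i) * cnj (At i l) * At i j)
     + ((\<Sum>i\<in>UNIV. complex_of_real (\<beta> i) * (cnj (W$i$l) * W$i$l) * (1 - mc i l * mc i l)) + complex_of_real N0)"
    using True by (simp add: Gm_def At_def Mom_def algebra_simps sum.distrib[symmetric] sum_subtractf[symmetric])
  then show ?thesis using True diag_lemma by simp
next
  case False
  then show ?thesis by (simp add: Gm_def At_def Mom_def mult_ac)
qed

lemma Gm_mult: "(Gm *v x) $ l = (\<Sum>i\<in>UNIV. complex_of_real (\<beta> i) * cnj (At i l) * (\<Sum>j\<in>UNIV. At i j * x$j)) + complex_of_real (Lam l) * x$l"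
proof -
  have 1: "(Gm *v x) $ l = (\<Sum>j\<in>UNIV. (\<Sum>i\<in>UNIV. complex_of_real (\<beta> i) * cnj (At i l) * At i j) * x$j)
       + (\<Sum>j\<in>UNIV. (if l = j then complex_of_real (Lam l) else 0) * x$j)"
    by (simp add: matrix_vector_mult_def Gm_eq distrib_right sum.distrib)
  have 2: "(\<Sum>j\<in>UNIV. (if l = j then complex_of_real (Lam l) else 0) * x$j) = complex_of_real (Lam l) * x$l"
    by (subst sum.cong[OF refl, of _ _ "\<lambda>j. if l = j then complex_of_real (Lam l) * x$j else 0"]) auto
  have 3: "(\<Sum>j\<in>UNIV. (\<Sum>i\<in>UNIV. complex_of_real (\<beta> i) * cnj (At i l) * At i j) * x$j)
      = (\<Sum>i\<in>UNIV. complex_of_real (\<beta> i) * cnj (At i l) * (\<Sum>j\<in>UNIV. At i j * x$j))"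
    by (simp add: sum_distrib_left sum_distrib_right mult_ac) (rule sum.swap)
  show ?thesis unfolding 1 2 3 ..
qed

lemma Gm_yv: "Gm *v yv = av"
unfolding vec_eq_iff proof (intro allI)
  fix l
  have s: "(\<Sum>j\<in>UNIV. At i j * yv$j) = complex_of_real tt * (if i = k then complex_of_real rho else 0)" for i
  proof -
    have "(\<Sum>j\<in>UNIV. At i j * yv$j) = complex_of_real tt * (\<Sum>j\<in>UNIV. At i j * cnj (At k j) / complex_of_real (Lam j))"
      by (simp add: yv_def sum_distrib_left divide_inverse mult_ac)
    then show ?thesis by (simp add: R_lemma)
  qed
  have "1 + rho * \<beta> k > 0" using rho_nonneg beta[of k] by (simp add: add_pos_nonneg)
  then have tt1: "tt * (1 + rho * \<beta> k) = \<beta> k" by (simp add: tt_def)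
  have "(Gm *v yv) $ l = complex_of_real (\<beta> k) * cnj (At k l) * complex_of_real tt * complex_of_real rho
      + complex_of_real (Lam l) * yv$l"
    by (simp add: Gm_mult s if_distrib[of "\<lambda>c. _ * c"] cong: if_cong)
  also have "\<dots> = cnj (At k l) * complex_of_real (tt * (1 + rho * \<beta> k))"
    using Lam_pos[of l] by (simp add: yv_def field_simps)
  also have "\<dots> = av $ l" by (simp add: tt1 av_def)
  finally show "(Gm *v yv) $ l = av $ l" .
qed

lemma av_yv: "(\<Sum>j\<in>UNIV. cnj (av$j) * yv$j) = complex_of_real (\<beta> k * tt * rho)"
proof -
  have "(\<Sum>j\<in>UNIV. cnj (av$j) * yv$j) = complex_of_real (\<beta> k) * complex_of_real tt * (\<Sum>j\<in>UNIV. At k j * cnj (At k j) / complex_of_real (Lam j))"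
    by (simp add: av_def yv_def sum_distrib_left divide_inverse mult_ac)
  then show ?thesis by (simp add: R_lemma)
qed


lemma Gm_ker: assumes x: "Gm *v x = 0" shows "x = 0"
proof -
  define s where "s i = (\<Sum>j\<in>UNIV. At i j * x$j)" for i
  have A: "(\<Sum>l\<in>UNIV. cnj (x$l) * (Gm *v x)$l)
     = (\<Sum>i\<in>UNIV. complex_of_real (\<beta> i) * (cnj (s i) * s i)) + (\<Sum>l\<in>UNIV. complex_of_real (Lam l) * (cnj (x$l) * x$l))"
  proof -
    have "(\<Sum>l\<in>UNIV. cnj (x$l) * (Gm *v x)$l)
       = (\<Sum>l\<in>UNIV. \<Sum>i\<in>UNIV. complex_of_real (\<beta> i) * (cnj (At i l * x$l) * s i)) + (\<Sum>l\<in>UNIV. complex_of_real (Lam l) * (cnj (x$l) * x$l))"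
    proof -
      have g: "(Gm *v x)$l = (\<Sum>i\<in>UNIV. complex_of_real (\<beta> i) * cnj (At i l) * s i) + complex_of_real (Lam l) * x$l" for l
        unfolding Gm_mult s_def by simp
      show ?thesis by (simp add: g distrib_left sum.distrib sum_distrib_left mult_ac)
    qed
    also have "(\<Sum>l\<in>UNIV. \<Sum>i\<in>UNIV. complex_of_real (\<beta> i) * (cnj (At i l * x$l) * s i))
        = (\<Sum>i\<in>UNIV. complex_of_real (\<beta> i) * (cnj (s i) * s i))"
    proof -
      have cs: "cnj (s i) = (\<Sum>l\<in>UNIV. cnj (At i l * x$l))" for i by (simp add: s_def cnj_sum)
      have "(\<Sum>i\<in>UNIV. complex_of_real (\<beta> i) * (cnj (s i) * s i))
          = (\<Sum>i\<in>UNIV. \<Sum>l\<in>UNIV. complex_of_real (\<beta> i) * (cnj (At i l * x$l) * s i))"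
        by (simp only: cs sum_distrib_left sum_distrib_right)
      also have "\<dots> = (\<Sum>l\<in>UNIV. \<Sum>i\<in>UNIV. complex_of_real (\<beta> i) * (cnj (At i l * x$l) * s i))"
        by (rule sum.swap)
      finally show ?thesis by (rule sym)
    qed
    finally show ?thesis .
  qed
  have cz: "cnj z * z = complex_of_real ((cmod z)\<^sup>2)" for z
    by (simp only: complex_norm_square mult.commute)
  have "complex_of_real ((\<Sum>i\<in>UNIV. \<beta> i * (cmod (s i))\<^sup>2) + (\<Sum>l\<in>UNIV. Lam l * (cmod (x$l))\<^sup>2)) = 0"
    using A x by (simp add: cz)
  then have "(\<Sum>i\<in>UNIV. \<beta> i * (cmod (s i))\<^sup>2) + (\<Sum>l\<in>UNIV. Lam l * (cmod (x$l))\<^sup>2) = 0"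
    by (simp only: of_real_eq_0_iff)
  moreover have "0 \<le> (\<Sum>i\<in>UNIV. \<beta> i * (cmod (s i))\<^sup>2)"
    using beta by (intro sum_nonneg) (simp add: less_imp_le)
  moreover have n2: "0 \<le> Lam l * (cmod (x$l))\<^sup>2" for l
    using Lam_pos[of l] by simp
  ultimately have "(\<Sum>l\<in>UNIV. Lam l * (cmod (x$l))\<^sup>2) = 0"
    by (smt (verit) sum_nonneg)
  then have "\<forall>l\<in>UNIV. Lam l * (cmod (x$l))\<^sup>2 = 0"
    using n2 by (subst sum_nonneg_eq_0_iff[symmetric]) auto
  then have z: "Lam l * (cmod (x$l))\<^sup>2 = 0" for l by blast
  have "x$l = 0" for l
  proof -
    have "Lam l \<noteq> 0" using Lam_pos[of l] by simp
    then show ?thesis using z[of l] by simp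
  qed
  then show ?thesis by (simp add: vec_eq_iff)
qed

lemma Gm_inv: "matrix_inv Gm ** Gm = mat 1"
proof -
  have "invertible Gm"
    unfolding invertible_left_inverse matrix_left_invertible_ker using Gm_ker by blast
  then show ?thesis
    unfolding matrix_inv_def invertible_def by (rule someI2_ex) auto
qed

lemma sum_delta_mult: fixes f g :: "'a::finite \<Rightarrow> complex"
  shows "(\<Sum>x\<in>UNIV. f x * (if x = y then g x else 0)) = f y * g y"
proof -
  have "(\<Sum>x\<in>UNIV. f x * (if x = y then g x else 0)) = (\<Sum>x\<in>UNIV. if x = y then f x * g x else 0)"
    by (rule sum.cong) auto
  also have "\<dots> = f y * g y" by (rule trans[OF sum.delta]) simp_all
  finally show ?thesis .
qed

lemma quad_entry: "(ctrans B ** (\<chi> i j. if i = j then c i else 0) ** B) $ l $ j = (\<Sum>i\<in>UNIV. cnj (B$i$l) * c i * B$i$j)"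
proof -
  have e1: "(ctrans B ** (\<chi> i j. if i = j then c i else 0)) $ l $ i = cnj (B$i$l) * c i" for i
    by (simp add: matrix_matrix_mult_def ctrans_def sum_delta_mult)
  have mm: "(A ** C) $ l $ j = (\<Sum>i\<in>UNIV. A$l$i * C$i$j)" for A :: "complex^'aa^'bb" and C :: "complex^'cc^'aa" and l j
    by (simp add: matrix_matrix_mult_def)
  show ?thesis unfolding mm[of "ctrans B ** (\<chi> i j. if i = j then c i else 0)" B] e1 ..
qed

lemma Pmat_hbi: "has_bochner_integral \<Omega>
   (\<lambda>w. (ctrans (hadamard (What S X) (Efull (E2 w))) ** (\<chi> i j. if i = j then complex_of_real (\<beta> i) else 0)
        ** hadamard (What S X) (Efull (E2 w))) $ l $ j)
   (\<Sum>i\<in>UNIV. complex_of_real (\<beta> i) * cnj (W$i$l) * W$i$j * Mom i l j)"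
proof -
  have "has_bochner_integral \<Omega> (\<lambda>w. \<Sum>i\<in>UNIV. complex_of_real (\<beta> i) * cnj (W$i$l) * W$i$j * (efn i l (Xr w) * efn i j (Xr w)))
     (\<Sum>i\<in>UNIV. complex_of_real (\<beta> i) * cnj (W$i$l) * W$i$j * Mom i l j)"
    by (intro has_bochner_integral_sum has_bochner_integral_mult_right Emom)
  then show ?thesis
  proof (rule has_bochner_integral_cong[THEN iffD1, rotated -1])
    fix w assume w: "w \<in> space \<Omega>"
    show "(\<Sum>i\<in>UNIV. complex_of_real (\<beta> i) * cnj (W$i$l) * W$i$j * (efn i l (Xr w) * efn i j (Xr w))) =
      (ctrans (hadamard (What S X) (Efull (E2 w))) ** (\<chi> i j. if i = j then complex_of_real (\<beta> i) else 0)
        ** hadamard (What S X) (Efull (E2 w))) $ l $ j"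
      unfolding quad_entry
    proof (rule sum.cong[OF refl])
      fix i
      show "complex_of_real (\<beta> i) * cnj (W$i$l) * W$i$j * (efn i l (Xr w) * efn i j (Xr w)) =
         cnj (hadamard (What S X) (Efull (E2 w)) $ i $ l) * complex_of_real (\<beta> i) * hadamard (What S X) (Efull (E2 w)) $ i $ j"
        unfolding hadamard_def vec_lambda_beta Efull_efn W_def complex_cnj_mult efn_cnj[OF w]
        by (simp only: ac_simps)
    qed
  qed auto
qed

lemma Pmat_eq: "Pmat \<Omega> S X \<beta> E2 + mat (complex_of_real N0) = Gm"
  unfolding vec_eq_iff
proof (intro allI)
  fix l j
  have "Pmat \<Omega> S X \<beta> E2 $ l $ j = (\<Sum>i\<in>UNIV. complex_of_real (\<beta> i) * cnj (W$i$l) * W$i$j * Mom i l j)"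
    unfolding Pmat_def mexp_def using Pmat_hbi[of l j] by (simp add: has_bochner_integral_integral_eq)
  then show "(Pmat \<Omega> S X \<beta> E2 + mat (complex_of_real N0)) $ l $ j = Gm $ l $ j"
    by (simp add: Gm_def mat_def)
qed

lemma vexp_eq: fixes j :: "'t + 'd" shows "vexp \<Omega> (\<lambda>w. row k (Efull (E2 w))) $ j = mc k j"
  unfolding vexp_def row_def using Em[of k j] by (simp add: Efull_efn has_bochner_integral_integral_eq)

lemma Cc_eq: "Cc = yv"
proof -
  have "Cc = matrix_inv Gm *v av"
    unfolding Cc_def Ccomb_def Pmat_eq
    by (simp add: vexp_eq) (simp add: av_def At_def row_def W_def)
  also have "\<dots> = matrix_inv Gm *v (Gm *v yv)" by (simp add: Gm_yv)
  also have "\<dots> = yv" by (simp add: matrix_vector_mul_assoc Gm_inv)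
  finally show ?thesis .
qed

end


context sys begin

lemma Mom_sym: "Mom i j l = Mom i l j"
  by (simp add: Mom_def mult.commute)

lemma dk_sum: "(\<Sum>i\<in>UNIV. f i * dk i) = f k"
  by (simp add: dk_def if_distrib[of "\<lambda>c. _ * c"] cong: if_cong)

lemma claimA: "(\<Sum>i\<in>UNIV. complex_of_real (\<beta> i) * (\<Sum>j\<in>UNIV. \<Sum>l\<in>UNIV. W$i$j * Cc$j * cnj (W$i$l * Cc$l) * Mom i j l))
    + (\<Sum>j\<in>UNIV. complex_of_real N0 * (Cc$j * cnj (Cc$j)))
  = (\<Sum>l\<in>UNIV. cnj (Cc$l) * (Gm *v Cc)$l)"
proof -
  let ?f = "\<lambda>i j l. complex_of_real (\<beta> i) * (W$i$j * Cc$j * cnj (W$i$l * Cc$l) * Mom i j l)"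
  have L: "(\<Sum>i\<in>UNIV. complex_of_real (\<beta> i) * (\<Sum>j\<in>UNIV. \<Sum>l\<in>UNIV. W$i$j * Cc$j * cnj (W$i$l * Cc$l) * Mom i j l))
      = (\<Sum>i\<in>UNIV. \<Sum>j\<in>UNIV. \<Sum>l\<in>UNIV. ?f i j l)"
    by (simp add: sum_distrib_left)
  have R1: "(\<Sum>l\<in>UNIV. cnj (Cc$l) * (Gm *v Cc)$l)
     = (\<Sum>l\<in>UNIV. \<Sum>j\<in>UNIV. \<Sum>i\<in>UNIV. ?f i j l) + (\<Sum>j\<in>UNIV. complex_of_real N0 * (Cc$j * cnj (Cc$j)))"
  proof -
    have g: "(Gm *v Cc)$l = (\<Sum>j\<in>UNIV. (\<Sum>i\<in>UNIV. complex_of_real (\<beta> i) * cnj (W$i$l) * W$i$j * Mom i l j) * Cc$j)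
        + complex_of_real N0 * Cc$l" for l
    proof -
      have "(Gm *v Cc)$l = (\<Sum>j\<in>UNIV. (\<Sum>i\<in>UNIV. complex_of_real (\<beta> i) * cnj (W$i$l) * W$i$j * Mom i l j) * Cc$j)
        + (\<Sum>j\<in>UNIV. (if l = j then complex_of_real N0 else 0) * Cc$j)"
        by (simp add: matrix_vector_mult_def Gm_def distrib_right sum.distrib)
      moreover have "(\<Sum>j\<in>UNIV. (if l = j then complex_of_real N0 else 0) * Cc$j) = complex_of_real N0 * Cc$l"
        by (subst sum.cong[OF refl, of _ _ "\<lambda>j. if l = j then complex_of_real N0 * Cc$j else 0"]) auto
      ultimately show ?thesis by simp
    qed
    show ?thesis
      by (simp add: g distrib_left sum.distrib sum_distrib_left sum_distrib_right Mom_sym[of _ _ l for l] mult_ac)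
  qed
  have sw: "(\<Sum>l\<in>UNIV. \<Sum>j\<in>UNIV. \<Sum>i\<in>UNIV. ?f i j l) = (\<Sum>i\<in>UNIV. \<Sum>j\<in>UNIV. \<Sum>l\<in>UNIV. ?f i j l)"
  proof -
    have "(\<Sum>l\<in>UNIV. \<Sum>j\<in>UNIV. \<Sum>i\<in>UNIV. ?f i j l) = (\<Sum>l\<in>UNIV. \<Sum>i\<in>UNIV. \<Sum>j\<in>UNIV. ?f i j l)"
      by (rule sum.cong[OF refl]) (rule sum.swap)
    also have "\<dots> = (\<Sum>i\<in>UNIV. \<Sum>l\<in>UNIV. \<Sum>j\<in>UNIV. ?f i j l)"
      by (rule sum.swap)
    also have "\<dots> = (\<Sum>i\<in>UNIV. \<Sum>j\<in>UNIV. \<Sum>l\<in>UNIV. ?f i j l)"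
      by (rule sum.cong[OF refl]) (rule sum.swap)
    finally show ?thesis .
  qed
  show ?thesis unfolding L R1 sw ..
qed

lemma Qv_eq: "Qv = complex_of_real (\<beta> k) - (\<Sum>j\<in>UNIV. cnj (av$j) * Cc$j)"
proof -
  have GC: "Gm *v Cc = av" using Cc_eq Gm_yv by simp
  have "Qv = ((\<Sum>i\<in>UNIV. complex_of_real (\<beta> i) * (\<Sum>j\<in>UNIV. \<Sum>l\<in>UNIV. W$i$j * Cc$j * cnj (W$i$l * Cc$l) * Mom i j l))
    + (\<Sum>j\<in>UNIV. complex_of_real N0 * (Cc$j * cnj (Cc$j))))
    - (\<Sum>i\<in>UNIV. (complex_of_real (\<beta> i) * (\<Sum>l\<in>UNIV. cnj (W$i$l * Cc$l) * mc i l)) * dk i)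
    - (\<Sum>i\<in>UNIV. (complex_of_real (\<beta> i) * (\<Sum>j\<in>UNIV. W$i$j * Cc$j * mc i j)) * dk i)
    + (\<Sum>i\<in>UNIV. complex_of_real (\<beta> i) * dk i)"
    by (simp add: Qv_def Vval_def algebra_simps sum.distrib sum_subtractf)
  also have "\<dots> = (\<Sum>l\<in>UNIV. cnj (Cc$l) * av$l)
    - complex_of_real (\<beta> k) * (\<Sum>l\<in>UNIV. cnj (W$k$l * Cc$l) * mc k l)
    - complex_of_real (\<beta> k) * (\<Sum>j\<in>UNIV. W$k$j * Cc$j * mc k j)
    + complex_of_real (\<beta> k)"
    unfolding claimA GC dk_sum ..
  also have "complex_of_real (\<beta> k) * (\<Sum>l\<in>UNIV. cnj (W$k$l * Cc$l) * mc k l) = (\<Sum>l\<in>UNIV. cnj (Cc$l) * av$l)"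
    by (simp add: av_def At_def sum_distrib_left mult_ac)
  also have "complex_of_real (\<beta> k) * (\<Sum>j\<in>UNIV. W$k$j * Cc$j * mc k j) = (\<Sum>j\<in>UNIV. cnj (av$j) * Cc$j)"
    by (simp add: av_def At_def sum_distrib_left mult_ac)
  finally show ?thesis by simp
qed

lemma Re_Qv: "Re Qv = real CARD('m) * 0 + \<beta> k / (1 + rho * \<beta> k)"
proof -
  have pos: "1 + rho * \<beta> k > 0" using rho_nonneg beta[of k] by (simp add: add_pos_nonneg)
  have "Re Qv = \<beta> k - \<beta> k * tt * rho"
    unfolding Qv_eq Cc_eq av_yv by simp
  also have "\<dots> = \<beta> k / (1 + rho * \<beta> k)"
    using pos by (simp add: tt_def field_simps)
  finally show ?thesis by simp
qed

lemma main:
  "integral\<^sup>L \<Omega> (\<lambda>w. (norm (Mrx (H w) S X (E2 w) (Z w) *v Ccomb \<Omega> S X \<beta> N0 E2 k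
                                      - col k (H w)))\<^sup>2)
           = real CARD('m) * \<beta> k / (1 + rhoDA CARD('t) CARD('d) PT PD N0 \<beta> BER k * \<beta> k)
       \<and> 10 * log 10 (integral\<^sup>L \<Omega> (\<lambda>w. (norm (Mrx (H w) S X (E2 w) (Z w) *v Ccomb \<Omega> S X \<beta> N0 E2 k
                                      - col k (H w)))\<^sup>2)
                      / integral\<^sup>L \<Omega> (\<lambda>w. (norm (col k (H w)))\<^sup>2))
         = 10 * log 10 (1 / (1 + rhoDA CARD('t) CARD('d) PT PD N0 \<beta> BER k * \<beta> k))"
proof -
  have pos: "1 + rho * \<beta> k > 0" using rho_nonneg beta[of k] by (simp add: add_pos_nonneg)
  have I1: "integral\<^sup>L \<Omega> (\<lambda>w. (norm (Mrx (H w) S X (E2 w) (Z w) *v Ccomb \<Omega> S X \<beta> N0 E2 k - col k (H w)))\<^sup>2)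
     = real CARD('m) * (\<beta> k / (1 + rho * \<beta> k))"
    using mse_hbi Re_Qv unfolding Cc_def by (simp add: has_bochner_integral_integral_eq)
  have I2: "integral\<^sup>L \<Omega> (\<lambda>w. (norm (col k (H w)))\<^sup>2) = real CARD('m) * \<beta> k"
    using hh_hbi by (simp add: has_bochner_integral_integral_eq)
  have ratio: "real CARD('m) * (\<beta> k / (1 + rho * \<beta> k)) / (real CARD('m) * \<beta> k) = 1 / (1 + rho * \<beta> k)"
  proof -
    have nz: "real CARD('m) * \<beta> k \<noteq> 0" using beta[of k] by simp
    have "real CARD('m) * (\<beta> k / (1 + rho * \<beta> k)) = (real CARD('m) * \<beta> k) * (1 / (1 + rho * \<beta> k))"
      by simp
    then show ?thesis using nz by simp
  qed
  show ?thesis unfolding I1 I2 ratio rho_def[symmetric] by simp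
qed

end

theorem proposition2:
  fixes \<Omega> :: "'w measure"
    and H :: "'w \<Rightarrow> complex^'k::finite^'m::finite"
    and E2 :: "'w \<Rightarrow> real^'d::finite^'k"
    and Z :: "'w \<Rightarrow> complex^('t::finite + 'd)^'m"
    and S :: "complex^'t^'k" and X :: "complex^'d^'k"
    and \<beta> BER :: "'k \<Rightarrow> real" and N0 PD PT :: real and k :: 'k
  assumes ps: "prob_space \<Omega>"
    and N0: "N0 > 0" and PD: "PD > 0" and PT: "PT > 0"
    and beta: "\<And>i. \<beta> i > 0"
    and BER: "\<And>i. 0 \<le> BER i \<and> BER i \<le> 1"
    and Xmod: "\<And>i j. (cmod (X $ i $ j))\<^sup>2 = PD"
    and SS: "S ** ctrans S = mat (complex_of_real (real CARD('t) * PT))"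
    and XX: "X ** ctrans X = mat (complex_of_real (real CARD('d) * PD))"
    and indep: "prob_space.indep_vars \<Omega> (\<lambda>_. borel) (rfam H E2 Z) UNIV"
    and Hdist: "\<And>i j. distr \<Omega> borel (\<lambda>w. H w $ i $ j) = cgauss (\<beta> j)"
    and Zdist: "\<And>i j. distr \<Omega> borel (\<lambda>w. Z w $ i $ j) = cgauss N0"
    and Eval: "\<And>w i j. w \<in> space \<Omega> \<Longrightarrow> E2 w $ i $ j = 1 \<or> E2 w $ i $ j = -1"
    and Eprob: "\<And>i j. measure \<Omega> {w \<in> space \<Omega>. E2 w $ i $ j = -1} = BER i"
  shows "integral\<^sup>L \<Omega> (\<lambda>w. (norm (Mrx (H w) S X (E2 w) (Z w) *v Ccomb \<Omega> S X \<beta> N0 E2 k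
                                      - col k (H w)))\<^sup>2)
           = real CARD('m) * \<beta> k / (1 + rhoDA CARD('t) CARD('d) PT PD N0 \<beta> BER k * \<beta> k)
       \<and> 10 * log 10 (integral\<^sup>L \<Omega> (\<lambda>w. (norm (Mrx (H w) S X (E2 w) (Z w) *v Ccomb \<Omega> S X \<beta> N0 E2 k
                                      - col k (H w)))\<^sup>2)
                      / integral\<^sup>L \<Omega> (\<lambda>w. (norm (col k (H w)))\<^sup>2))
         = 10 * log 10 (1 / (1 + rhoDA CARD('t) CARD('d) PT PD N0 \<beta> BER k * \<beta> k))"
proof -
  interpret sys \<Omega> H E2 Z S X \<beta> BER N0 PD PT k
    by (rule sys.intro) (fact assms)+
  show ?thesis by (rule main)
qed

end
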